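(* A translation-invariant quasifree state $\omega$ on $\mathcal{F}$ is invariant under the automorphism $G_{\mathcal{F}}$ if and only if the symbol of its majorana two-point matrix has the form $$Q^{(\omega)}(p)=\begin{bmatrix}q_{1,1}^{(\omega)}(p)&0\\0&q_{2,2}^{(\omega)}(p)\end{bmatrix},$$ where $q_{1,1}^{(\omega)}$ and $q_{2,2}^{(\omega)}$ are real $L^\infty([-\pi,\pi])$ functions taking values between $0$ and $2$ almost everywhere.
   Context: $\mathcal{F}=\mathrm{CAR}(\ell^2(\mathbb{Z}))$ is the C$^*$-algebra generated by $\mathbb{1}$ and $c_x,c_x^*$ ($x\in\mathbb{Z}$) with $c_xc_y^*+c_y^*c_x=\delta_{xy}\mathbb{1}$, $c_xc_y+c_yc_x=0$. Majorana operators: $m_{2x}=i(c_x-c_x^* )$, $m_{2x+1}=c_x+c_x^*$. The translation $\tau_{\mathcal{F}}(c_x)=c_{x+1}$ satisfies $\tau_{\mathcal{F}}(m_x)=m_{x+2}$. $G_{\mathcal{F}}$ is the automorphism of $\mathcal{F}$ determined by $G_{\mathcal{F}}(m_{2x})=m_{2x-2}$, $G_{\mathcal{F}}(m_{2x+1})=m_{2x+3}$. A state $\omega$ is quasifree if it vanishes on odd monomials of majorana operators and $\omega(m_{x_1}\cdots m_{x_{2n}})=\sum_\pi\mathrm{sgn}(\pi)\prod_{l=1}^n\omega(m_{x_{\pi(2l-1)}}m_{x_{\pi(2l)}})$, the sum over pairings. A translation-invariant ($\omega\circ\tau_{\mathcal F}=\omega$) quasifree state is described by its symbol $Q^{(\omega)}\in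 L^\infty_{2\times2}([-\pi,\pi])$ via $\begin{bmatrix}\omega(m_{2x}m_{2y})&\omega(m_{2x}m_{2y+1})\\\omega(m_{2x+1}m_{2y})&\omega(m_{2x+1}m_{2y+1})\end{bmatrix}=\frac1{2\pi}\int_{-\pi}^{\pi}Q^{(\omega)}(p)e^{-ip(x-y)}dp$, where a.e. $Q^\dagger=Q$, $Q(-p)=2\mathbb{1}-Q(p)^T$, $0\le Q(p)\le 2\mathbb{1}$. *)

theory Defs
  imports "HOL-Analysis.Analysis" "HOL-Combinatorics.Permutations"
begin

text \<open>Majorana operators m_n (n :: int) generate CAR(l2(Z)); a word (list of indices)
  [n1,...,nk] stands for the monomial m_n1 ... m_nk. A state on the CAR algebra is
  determined by (and equivalent to) its values on majorana monomials; we represent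
  a state by this moment functional om :: int list => complex.\<close>

text \<open>State condition: the moment functional respects the Clifford relations
  m_x m_y + m_y m_x = 2 delta_xy 1 (so it is a well-defined linear functional on the
  algebraic CAR algebra), is normalized and positive. Since m_x is self-adjoint,
  (m_w)^* = m_(rev w).\<close>
definition is_state :: "(int list \<Rightarrow> complex) \<Rightarrow> bool" where
  "is_state om \<longleftrightarrow>
     om [] = 1 \<and>
     (\<forall>u v x y. om (u @ [x, y] @ v) + om (u @ [y, x] @ v)
                 = (if x = y then 2 else 0) * om (u @ v)) \<and>
     (\<forall>(n::nat) (ws :: nat \<Rightarrow> int list) (cs :: nat \<Rightarrow> complex).
        let s = (\<Sum>i<n. \<Sum>j<n. cnj (cs i) * cs j * om (rev (ws i) @ ws j))
        in Im s = 0 \<and> Re s \<ge> 0)"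

text \<open>Pairings of {0,...,2n-1}: permutations sigma with sigma(2l) < sigma(2l+1) and
  sigma(0) < sigma(2) < ... (pairs are (sigma(2l), sigma(2l+1))).\<close>
definition pairings :: "nat \<Rightarrow> (nat \<Rightarrow> nat) set" where
  "pairings n = {\<sigma>. \<sigma> permutes {..<2*n} \<and> (\<forall>l<n. \<sigma> (2*l) < \<sigma> (2*l+1))
                     \<and> (\<forall>l. l + 1 < n \<longrightarrow> \<sigma> (2*l) < \<sigma> (2*l+2))}"

definition quasifree :: "(int list \<Rightarrow> complex) \<Rightarrow> bool" where
  "quasifree om \<longleftrightarrow>
     (\<forall>w. odd (length w) \<longrightarrow> om w = 0) \<and>
     (\<forall>w. even (length w) \<longrightarrow>
        om w = (\<Sum>\<sigma>\<in>pairings (length w div 2). of_int (sign \<sigma>) *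
                  (\<Prod>l<length w div 2. om [w ! \<sigma> (2*l), w ! \<sigma> (2*l+1)])))"

definition tauF_idx :: "int \<Rightarrow> int" where "tauF_idx n = n + 2"
definition GF_idx :: "int \<Rightarrow> int" where
  "GF_idx n = (if even n then n - 2 else n + 2)"

text \<open>omega o alpha = omega for an automorphism alpha acting on majoranas by an index map:
  equality on all monomials (which span a dense subalgebra).\<close>
definition invariant_under :: "(int \<Rightarrow> int) \<Rightarrow> (int list \<Rightarrow> complex) \<Rightarrow> bool" where
  "invariant_under g om \<longleftrightarrow> (\<forall>w. om (map g w) = om w)"

text \<open>Majorana index for row/column a of the 2x2 matrix at site x: a=1 -> 2x, a=2 -> 2x+1.\<close>
definition mj :: "int \<Rightarrow> 2 \<Rightarrow> int" where
  "mj x a = 2 * x + (if a = 1 then 0 else 1)"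

definition Linf_on :: "(real \<Rightarrow> 'b::real_normed_vector) \<Rightarrow> bool" where
  "Linf_on f \<longleftrightarrow> f \<in> borel_measurable (restrict_space lborel {-pi..pi}) \<and>
     (\<exists>C. AE p in lborel. p \<in> {-pi..pi} \<longrightarrow> norm (f p) \<le> C)"

definition is_symbol :: "(int list \<Rightarrow> complex) \<Rightarrow> (real \<Rightarrow> complex^2^2) \<Rightarrow> bool" where
  "is_symbol om Q \<longleftrightarrow> (\<forall>a b. Linf_on (\<lambda>p. Q p $ a $ b)) \<and>
     (\<forall>x y a b. om [mj x a, mj y b] =
        complex_of_real (1 / (2 * pi)) *
        (LINT p:{-pi..pi}|lborel. Q p $ a $ b * exp (- \<i> * complex_of_real p * of_int (x - y))))"

end

theory Submission
  imports Defs
begin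

abbreviation NN :: "real measure" where "NN \<equiv> restrict_space lborel {-pi..pi}"

lemma space_NN[simp]: "space NN = {-pi..pi}"
  by (simp add: space_restrict_space)

lemma sets_NN_ok: "{-pi..pi::real} \<inter> space lborel \<in> sets lborel" by simp

lemma finite_NN: "finite_measure NN"
proof (rule finite_measureI)
  show "emeasure NN (space NN) \<noteq> \<infinity>"
    by (simp add: emeasure_restrict_space)
qed

lemma set_int_NN:
  fixes f :: "real \<Rightarrow> 'a::{banach, second_countable_topology}"
  shows "(LINT p:{-pi..pi}|lborel. f p) = integral\<^sup>L NN f"
  unfolding set_lebesgue_integral_def by (rule integral_restrict_space[OF sets_NN_ok, symmetric])

lemma AE_NN: "(AE p in NN. P p) \<longleftrightarrow> (AE p in lborel. p \<in> {-pi..pi} \<longrightarrow> P p)"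
  by (simp add: AE_restrict_space_iff)

lemma Linf_iff: "Linf_on f \<longleftrightarrow> f \<in> borel_measurable NN \<and> (\<exists>C. AE p in NN. norm (f p) \<le> C)"
  by (simp add: Linf_on_def AE_NN)

lemma Linf_integrable:
  fixes f :: "real \<Rightarrow> 'a::{banach, second_countable_topology}"
  shows "Linf_on f \<Longrightarrow> integrable NN f"
proof -
  assume "Linf_on f"
  then obtain C where "AE p in NN. norm (f p) \<le> C" "f \<in> borel_measurable NN"
    unfolding Linf_iff by auto
  then show "integrable NN f" by (rule finite_measure.integrable_const_bound[OF finite_NN])
qed

lemma Linf_mult:
  fixes f g :: "real \<Rightarrow> 'a::{second_countable_topology, real_normed_algebra}"
  assumes "Linf_on f" "Linf_on g" shows "Linf_on (\<lambda>p. f p * g p)"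
proof -
  from assms obtain C D where C: "AE p in NN. norm (f p) \<le> C" and D: "AE p in NN. norm (g p) \<le> D"
    and m: "f \<in> borel_measurable NN" "g \<in> borel_measurable NN" unfolding Linf_iff by blast
  have "AE p in NN. norm (f p * g p) \<le> C * D"
    using C D
  proof eventually_elim
    case (elim p)
    have "norm (f p * g p) \<le> norm (f p) * norm (g p)" by (rule norm_mult_ineq)
    also have "\<dots> \<le> C * D" using elim by (intro mult_mono) (auto intro: order_trans[OF norm_ge_zero])
    finally show ?case .
  qed
  then show ?thesis unfolding Linf_iff using m by auto
qed

lemma Linf_cont:
  fixes f :: "real \<Rightarrow> 'a::{real_normed_vector, second_countable_topology}"
  assumes "continuous_on UNIV f" shows "Linf_on f"
proof -
  have "compact (f ` {-pi..pi})"
    by (rule compact_continuous_image) (auto intro: continuous_on_subset[OF assms])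
  then obtain C where "\<forall>x\<in>f ` {-pi..pi}. norm x \<le> C"
    using compact_imp_bounded[of "f ` {-pi..pi}"] unfolding bounded_iff by metis
  then have "AE p in NN. norm (f p) \<le> C" by (auto simp: AE_NN)
  moreover have "f \<in> borel_measurable NN"
    by (rule measurable_restrict_space1) (simp add: borel_measurable_continuous_onI assms)
  ultimately show ?thesis unfolding Linf_iff by auto
qed

lemma Linf_comp:
  fixes f :: "real \<Rightarrow> 'a::{real_normed_vector, second_countable_topology}"
    and g :: "'a \<Rightarrow> 'b::{real_normed_vector, second_countable_topology}"
  assumes "Linf_on f" "bounded_linear g" shows "Linf_on (\<lambda>p. g (f p))"
proof -
  from assms(1) obtain C where C: "AE p in NN. norm (f p) \<le> C" and m: "f \<in> borel_measurable NN"
    unfolding Linf_iff by blast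
  obtain K where K: "\<And>x. norm (g x) \<le> norm x * K" using bounded_linear.bounded[OF assms(2)] by blast
  have "AE p in NN. norm (g (f p)) \<le> C * \<bar>K\<bar>" using C
  proof eventually_elim
    case (elim p)
    have "norm (g (f p)) \<le> norm (f p) * \<bar>K\<bar>" using K[of "f p"]
      by (metis abs_ge_self mult_left_mono norm_ge_zero order_trans)
    also have "\<dots> \<le> C * \<bar>K\<bar>" using elim by (intro mult_right_mono) auto
    finally show ?case .
  qed
  moreover have "(\<lambda>p. g (f p)) \<in> borel_measurable NN"
    using measurable_compose[OF m borel_measurable_continuous_onI[OF linear_continuous_on[OF assms(2)]]]
    by (simp add: o_def)
  ultimately show ?thesis unfolding Linf_iff by auto
qed


section \<open>Trigonometric polynomials\<close>

definition trigp :: "(real \<Rightarrow> complex) \<Rightarrow> bool" where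
  "trigp f \<longleftrightarrow> (\<exists>L::(complex \<times> int) list. \<forall>p.
      f p = (\<Sum>x\<leftarrow>L. fst x * exp (\<i> * of_int (snd x) * of_real p)))"

lemma trigp_exp: "trigp (\<lambda>p. c * exp (\<i> * of_int k * of_real p))"
  unfolding trigp_def by (rule exI[of _ "[(c,k)]"]) simp

lemma trigp_const: "trigp (\<lambda>p. c)"
  using trigp_exp[of c 0] by simp

lemma trigp_add: assumes "trigp f" "trigp g" shows "trigp (\<lambda>p. f p + g p)"
proof -
  from assms obtain L M where L: "\<forall>p. f p = (\<Sum>x\<leftarrow>L. fst x * exp (\<i> * of_int (snd x) * of_real p))"
    and M: "\<forall>p. g p = (\<Sum>x\<leftarrow>M. fst x * exp (\<i> * of_int (snd x) * of_real p))"
    unfolding trigp_def by blast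
  show ?thesis unfolding trigp_def by (rule exI[of _ "L @ M"]) (simp add: L M)
qed

lemma trig_mult_aux:
  "c * exp (\<i> * of_int k * of_real p) * (\<Sum>x\<leftarrow>M. fst x * exp (\<i> * of_int (snd x) * of_real p))
   = (\<Sum>x\<leftarrow>map (\<lambda>y. (c * fst y, k + snd y)) M. fst x * exp (\<i> * of_int (snd x) * of_real p))"
  by (induction M) (auto simp: ring_distribs exp_add mult_ac)

lemma trig_mult_aux2:
  "(\<Sum>x\<leftarrow>L. fst x * exp (\<i> * of_int (snd x) * of_real p)) * (\<Sum>x\<leftarrow>M. fst x * exp (\<i> * of_int (snd x) * of_real p))
   = (\<Sum>x\<leftarrow>concat (map (\<lambda>z. map (\<lambda>y. (fst z * fst y, snd z + snd y)) M) L). fst x * exp (\<i> * of_int (snd x) * of_real p))"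
proof (induction L)
  case Nil then show ?case by simp
next
  case (Cons a L)
  show ?case using Cons trig_mult_aux[of "fst a" "snd a" p M] by (simp add: ring_distribs)
qed

lemma trigp_mult: assumes "trigp f" "trigp g" shows "trigp (\<lambda>p. f p * g p)"
proof -
  from assms obtain L M where L: "\<forall>p. f p = (\<Sum>x\<leftarrow>L. fst x * exp (\<i> * of_int (snd x) * of_real p))"
    and M: "\<forall>p. g p = (\<Sum>x\<leftarrow>M. fst x * exp (\<i> * of_int (snd x) * of_real p))"
    unfolding trigp_def by blast
  show ?thesis unfolding trigp_def
    by (rule exI[of _ "concat (map (\<lambda>z. map (\<lambda>y. (fst z * fst y, snd z + snd y)) M) L)"])
       (simp add: L M trig_mult_aux2)
qed

lemma bounded_linear_complex_real:
  fixes g :: "complex \<Rightarrow> real"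
  assumes "bounded_linear g" shows "g z = Re z * g 1 + Im z * g \<i>"
proof -
  interpret linear g using assms by (rule bounded_linear.linear)
  have "z = Re z *\<^sub>R 1 + Im z *\<^sub>R \<i>" by (simp add: complex_eq_iff)
  then have "g z = g (Re z *\<^sub>R 1 + Im z *\<^sub>R \<i>)" by simp
  also have "\<dots> = Re z * g 1 + Im z * g \<i>" by (simp add: add scale)
  finally show ?thesis .
qed

lemma trigp_poly:
  fixes g :: "complex \<Rightarrow> real"
  assumes "real_polynomial_function g" shows "trigp (\<lambda>p. complex_of_real (g (cis p)))"
  using assms
proof (induction g rule: real_polynomial_function.induct)
  case (linear g)
  define a where "a = complex_of_real (g 1)"
  define b where "b = complex_of_real (g \<i>)"
  have eq: "complex_of_real (g (cis p)) =
      (a/2 + b/(2*\<i>)) * exp (\<i> * of_int 1 * of_real p) + (a/2 - b/(2*\<i>)) * exp (\<i> * of_int (-1) * of_real p)" for p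
  proof -
    have "complex_of_real (g (cis p)) = complex_of_real (cos p) * a + complex_of_real (sin p) * b"
      using bounded_linear_complex_real[OF linear, of "cis p"] by (simp add: a_def b_def)
    also have "\<dots> = cos (complex_of_real p) * a + sin (complex_of_real p) * b"
      by (simp add: cos_of_real sin_of_real)
    also have "\<dots> = (a/2 + b/(2*\<i>)) * exp (\<i> * of_int 1 * of_real p) + (a/2 - b/(2*\<i>)) * exp (\<i> * of_int (-1) * of_real p)"
      unfolding cos_exp_eq sin_exp_eq by (simp add: field_simps)
    finally show ?thesis .
  qed
  show ?case unfolding eq by (intro trigp_add trigp_exp)
next
  case (const c) show ?case by (rule trigp_const)
next
  case (add f g) then show ?case by (simp add: trigp_add)
next
  case (mult f g) then show ?case by (simp add: trigp_mult)
qed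


section \<open>Positivity lemma\<close>

lemma cont_cis_comp:
  assumes "continuous_on (sphere 0 1) F"
  shows "continuous_on UNIV (\<lambda>p. F (cis p))"
  by (rule continuous_on_compose2[OF assms]) (auto intro!: continuous_intros)

lemma Linf_abs: "Linf_on (h::real \<Rightarrow> real) \<Longrightarrow> Linf_on (\<lambda>p. \<bar>h p\<bar>)"
  unfolding Linf_iff by auto

context
  fixes h :: "real \<Rightarrow> real"
  assumes hL: "Linf_on h"
    and pos: "\<And>(n::nat) c k. 0 \<le> integral\<^sup>L NN (\<lambda>p. h p * (cmod (\<Sum>j<n. c j * exp (\<i> * of_int (k j) * of_real p)))\<^sup>2)"
begin

lemma pos_poly:
  assumes g: "real_polynomial_function (g :: complex \<Rightarrow> real)"
  shows "0 \<le> integral\<^sup>L NN (\<lambda>p. h p * (g (cis p))\<^sup>2)"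
proof -
  obtain L where L: "\<And>p. complex_of_real (g (cis p)) = (\<Sum>x\<leftarrow>L. fst x * exp (\<i> * of_int (snd x) * of_real p))"
    using trigp_poly[OF g] unfolding trigp_def by blast
  define n where "n = length L"
  define c where "c = (\<lambda>j. fst (L!j))"
  define k where "k = (\<lambda>j. snd (L!j))"
  have "(g (cis p))\<^sup>2 = (cmod (\<Sum>j<n. c j * exp (\<i> * of_int (k j) * of_real p)))\<^sup>2" for p
  proof -
    have "(\<Sum>x\<leftarrow>L. fst x * exp (\<i> * of_int (snd x) * of_real p)) = (\<Sum>j<n. c j * exp (\<i> * of_int (k j) * of_real p))"
      unfolding sum_list_sum_nth by (auto simp: atLeast0LessThan n_def c_def k_def intro!: sum.cong)
    then have "cmod (complex_of_real (g (cis p))) = cmod (\<Sum>j<n. c j * exp (\<i> * of_int (k j) * of_real p))"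
      using L[of p] by simp
    then show ?thesis by (metis norm_of_real power2_abs)
  qed
  then show ?thesis using pos[where n=n and c=c and k=k] by simp
qed

lemma int_habs: "integrable NN (\<lambda>p. \<bar>h p\<bar>)"
  using Linf_integrable[OF Linf_abs[OF hL]] .

lemma pos_cont:
  assumes Fc: "continuous_on (sphere 0 1) F" and F0: "\<And>z. z \<in> sphere 0 1 \<Longrightarrow> 0 \<le> F z"
  shows "0 \<le> integral\<^sup>L NN (\<lambda>p. h p * F (cis p))"
proof -
  let ?S = "sphere (0::complex) 1"
  define A where "A = integral\<^sup>L NN (\<lambda>p. \<bar>h p\<bar>)"
  have A0: "0 \<le> A" unfolding A_def by (rule integral_nonneg_AE) auto
  let ?I = "integral\<^sup>L NN (\<lambda>p. h p * F (cis p))"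
  have intF: "integrable NN (\<lambda>p. h p * F (cis p))"
    by (rule Linf_integrable, rule Linf_mult[OF hL], rule Linf_cont, rule cont_cis_comp[OF Fc])
  have key: "- e \<le> ?I" if e: "0 < e" for e
  proof -
    define G where "G z = sqrt (F z)" for z
    have Gc: "continuous_on ?S G" unfolding G_def by (intro continuous_on_real_sqrt Fc)
    have "compact (G ` ?S)" by (intro compact_continuous_image Gc compact_sphere)
    then obtain B0 where B0: "\<forall>x\<in>G ` ?S. norm x \<le> B0"
      using compact_imp_bounded[of "G ` ?S"] unfolding bounded_iff by metis
    define B where "B = max B0 0"
    have B: "\<And>z. z \<in> ?S \<Longrightarrow> \<bar>G z\<bar> \<le> B" and Bnn: "0 \<le> B"
      using B0 by (auto simp: B_def intro: le_max_iff_disj[THEN iffD2])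
    define \<epsilon> where "\<epsilon> = min 1 (e / ((A+1)*(2*B+1)))"
    have \<epsilon>0: "0 < \<epsilon>" unfolding \<epsilon>_def using e A0 Bnn by auto
    obtain g where gp: "polynomial_function g" and gG: "\<forall>z\<in>?S. norm (G z - g z) < \<epsilon>"
      using Stone_Weierstrass_polynomial_function[OF compact_sphere Gc \<epsilon>0] by blast
    have gr: "real_polynomial_function g" using gp real_polynomial_function_eq by blast
    define \<delta> where "\<delta> = e / (A+1)"
    have \<delta>0: "0 \<le> \<delta>" unfolding \<delta>_def using e A0 by auto
    have bd: "\<bar>F (cis p) - (g (cis p))\<^sup>2\<bar> \<le> \<delta>" for p
    proof -
      let ?z = "cis p"
      have zS: "?z \<in> ?S" by simp
      have FG: "F ?z = (G ?z)\<^sup>2" unfolding G_def using F0[OF zS] by simp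
      have d: "\<bar>G ?z - g ?z\<bar> \<le> \<epsilon>" using gG zS by (simp add: less_imp_le)
      have s: "\<bar>G ?z + g ?z\<bar> \<le> 2*B+1"
      proof -
        have "\<bar>g ?z\<bar> \<le> \<bar>G ?z\<bar> + \<epsilon>" using d by linarith
        moreover have "\<epsilon> \<le> 1" unfolding \<epsilon>_def by auto
        ultimately show ?thesis using B[OF zS] by linarith
      qed
      have "\<bar>F ?z - (g ?z)\<^sup>2\<bar> = \<bar>G ?z - g ?z\<bar> * \<bar>G ?z + g ?z\<bar>"
        unfolding FG by (simp add: power2_eq_square abs_mult[symmetric] algebra_simps)
      also have "\<dots> \<le> \<epsilon> * (2*B+1)" using d s by (intro mult_mono) auto
      also have "\<dots> \<le> e / ((A+1)*(2*B+1)) * (2*B+1)"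
        unfolding \<epsilon>_def using Bnn by (intro mult_right_mono) auto
      also have "\<dots> = \<delta>"
      proof -
        have nz: "A + 1 \<noteq> 0" "2*B+1 \<noteq> 0" using Bnn A0 by auto
        then show ?thesis unfolding \<delta>_def by (simp add: divide_simps)
      qed
      finally show ?thesis .
    qed
    have gc: "continuous_on UNIV (\<lambda>p. g (cis p))"
      by (rule continuous_on_compose2[OF continuous_on_polymonial_function[OF gp, of UNIV]])
         (auto intro!: continuous_intros)
    have intg: "integrable NN (\<lambda>p. h p * (g (cis p))\<^sup>2)"
      by (rule Linf_integrable, rule Linf_mult[OF hL], rule Linf_cont)
         (intro continuous_intros gc)
    have intd: "integrable NN (\<lambda>p. h p * (F (cis p) - (g (cis p))\<^sup>2))"
      using Bochner_Integration.integrable_diff[OF intF intg] by (simp add: algebra_simps)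
    have "?I = integral\<^sup>L NN (\<lambda>p. h p * (g (cis p))\<^sup>2) + integral\<^sup>L NN (\<lambda>p. h p * (F (cis p) - (g (cis p))\<^sup>2))"
      using Bochner_Integration.integral_add[OF intg intd] by (simp add: algebra_simps)
    moreover have "0 \<le> integral\<^sup>L NN (\<lambda>p. h p * (g (cis p))\<^sup>2)" by (rule pos_poly[OF gr])
    moreover have "integral\<^sup>L NN (\<lambda>p. - (\<bar>h p\<bar> * \<delta>)) \<le> integral\<^sup>L NN (\<lambda>p. h p * (F (cis p) - (g (cis p))\<^sup>2))"
    proof (rule integral_mono[OF _ intd])
      show "integrable NN (\<lambda>p. - (\<bar>h p\<bar> * \<delta>))" using int_habs by auto
      fix p
      have "\<bar>h p * (F (cis p) - (g (cis p))\<^sup>2)\<bar> \<le> \<bar>h p\<bar> * \<delta>"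
        unfolding abs_mult by (intro mult_left_mono bd) auto
      then show "- (\<bar>h p\<bar> * \<delta>) \<le> h p * (F (cis p) - (g (cis p))\<^sup>2)" by linarith
    qed
    moreover have "integral\<^sup>L NN (\<lambda>p. - (\<bar>h p\<bar> * \<delta>)) = - (A * \<delta>)"
      unfolding A_def by simp
    moreover have "A * \<delta> \<le> e"
      unfolding \<delta>_def using A0 e by (simp add: field_simps)
    ultimately show ?thesis by linarith
  qed
  show ?thesis
  proof (rule ccontr)
    assume "\<not> 0 \<le> ?I"
    then show False using key[of "- ?I / 2"] by linarith
  qed
qed

lemma hm: "h \<in> borel_measurable NN" using hL unfolding Linf_iff by blast

lemma pos_closed:
  assumes Kc: "closed K" and Kne: "K \<noteq> {}"
  shows "0 \<le> integral\<^sup>L NN (\<lambda>p. h p * indicator K (cis p))"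
proof -
  define F where "F m z = max 0 (1 - real m * infdist z K)" for m :: nat and z :: complex
  have Fc: "continuous_on (sphere 0 1) (F m)" for m unfolding F_def by (intro continuous_intros)
  have F01: "0 \<le> F m z" "F m z \<le> 1" for m z
    unfolding F_def using infdist_nonneg[of z K] by (auto simp: max_def)
  have lim: "(\<lambda>m. h p * F m (cis p)) \<longlonglongrightarrow> h p * indicator K (cis p)" for p
  proof (cases "cis p \<in> K")
    case True
    then show ?thesis by (simp add: F_def)
  next
    case False
    have d0: "0 < infdist (cis p) K"
      using False in_closed_iff_infdist_zero[OF Kc Kne, of "cis p"] infdist_nonneg[of "cis p" K] by auto
    obtain N where N: "1 < real N * infdist (cis p) K" using ex_less_of_nat_mult[OF d0] by blast
    have "eventually (\<lambda>m. h p * F m (cis p) = h p * indicator K (cis p)) sequentially"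
      unfolding eventually_sequentially
    proof (intro exI allI impI)
      fix m assume "N \<le> m"
      then have "real N * infdist (cis p) K \<le> real m * infdist (cis p) K"
        using d0 by (intro mult_right_mono) auto
      then have "F m (cis p) = 0" using N unfolding F_def by auto
      then show "h p * F m (cis p) = h p * indicator K (cis p)" using False by simp
    qed
    then show ?thesis by (rule tendsto_eventually)
  qed
  have cism: "cis \<in> borel_measurable (borel :: real measure)"
    by (rule borel_measurable_continuous_onI) (intro continuous_intros)
  have indm: "(\<lambda>p. indicator K (cis p) :: real) \<in> borel_measurable NN"
    apply (rule measurable_restrict_space1)
    unfolding measurable_lborel2
    by (rule measurable_compose[OF cism borel_measurable_indicator]) (simp add: Kc borel_closed)
  have sm: "(\<lambda>p. h p * F m (cis p)) \<in> borel_measurable NN" for m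
    by (rule borel_measurable_integrable, rule Linf_integrable, rule Linf_mult[OF hL], rule Linf_cont,
        rule cont_cis_comp[OF Fc])
  have conv: "(\<lambda>m. integral\<^sup>L NN (\<lambda>p. h p * F m (cis p))) \<longlonglongrightarrow> integral\<^sup>L NN (\<lambda>p. h p * indicator K (cis p))"
  proof (rule integral_dominated_convergence[where w="\<lambda>p. \<bar>h p\<bar>"])
    show "(\<lambda>p. h p * indicator K (cis p)) \<in> borel_measurable NN"
      using hm indm by (rule borel_measurable_times)
    show "(\<lambda>p. h p * F m (cis p)) \<in> borel_measurable NN" for m by (rule sm)
    show "integrable NN (\<lambda>p. \<bar>h p\<bar>)" by (rule int_habs)
    show "AE p in NN. (\<lambda>m. h p * F m (cis p)) \<longlonglongrightarrow> h p * indicator K (cis p)"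
      by (intro AE_I2 lim)
    show "AE p in NN. norm (h p * F m (cis p)) \<le> \<bar>h p\<bar>" for m
    proof (intro AE_I2)
      fix p
      have "\<bar>h p\<bar> * \<bar>F m (cis p)\<bar> \<le> \<bar>h p\<bar> * 1" using F01[of m "cis p"] by (intro mult_left_mono) auto
      then show "norm (h p * F m (cis p)) \<le> \<bar>h p\<bar>" by (simp add: abs_mult)
    qed
  qed
  show ?thesis
  proof (rule LIMSEQ_le_const[OF conv])
    show "\<exists>N. \<forall>n\<ge>N. 0 \<le> integral\<^sup>L NN (\<lambda>p. h p * F n (cis p))"
      using pos_cont[OF Fc F01(1)] by blast
  qed
qed

lemma posP: "AE p in NN. 0 \<le> h p"
proof (rule ccontr)
  assume nAE: "\<not> (AE p in NN. 0 \<le> h p)"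
  define E where "E = {p \<in> space NN. \<not> 0 \<le> h p}"
  have "E = h -` {..<0} \<inter> space NN" unfolding E_def by auto
  then have E_NN: "E \<in> sets NN" using measurable_sets[OF hm, of "{..<0}"] by simp
  have E_ne0: "emeasure NN E \<noteq> 0" using AE_iff_measurable[OF E_NN E_def[symmetric]] nAE by simp
  have E_sub: "E \<subseteq> {-pi..pi}" and E_bor: "E \<in> sets lborel"
    using E_NN unfolding sets_restrict_space_iff[OF sets_NN_ok] by simp_all
  have eNE: "emeasure NN E = emeasure lborel E" by (rule emeasure_restrict_space[OF sets_NN_ok E_sub])
  have eLE: "emeasure lebesgue E = emeasure lborel E"
    using E_bor by (simp add: emeasure_completion)
  have "emeasure lborel E \<le> emeasure lborel {-pi..pi}" by (rule emeasure_mono[OF E_sub]) simp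
  then have fin: "emeasure lebesgue E \<noteq> top" using eLE by (auto simp: top_unique)
  define e where "e = measure lebesgue E"
  have eE: "emeasure lebesgue E = ennreal e" unfolding e_def using fin by (rule emeasure_eq_ennreal_measure)
  have e0: "0 < e"
  proof -
    have "e \<noteq> 0" using eE eLE eNE E_ne0 by auto
    then show ?thesis unfolding e_def using measure_nonneg[of lebesgue E] by linarith
  qed
  have E_leb: "E \<in> sets lebesgue" using E_bor by simp
  obtain T where T: "closed T" "T \<subseteq> E" "E - T \<in> lmeasurable" "emeasure lebesgue (E - T) < ennreal e"
    using sets_lebesgue_inner_closed[OF E_leb e0] by blast
  have T_bor: "T \<in> sets lborel" using T(1) by (simp add: borel_closed)
  have T_sub: "T \<subseteq> {-pi..pi}" using T(2) E_sub by auto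
  have eNT: "emeasure NN T = emeasure lborel T" by (rule emeasure_restrict_space[OF sets_NN_ok T_sub])
  have Tpos: "emeasure lborel T \<noteq> 0"
  proof
    assume "emeasure lborel T = 0"
    then have "T \<in> null_sets lborel" using T_bor by (simp add: null_sets_def)
    then have "T \<in> null_sets lebesgue" by (rule null_sets_completionI)
    then have "emeasure lebesgue (E - T) = emeasure lebesgue E" using E_leb by (rule emeasure_Diff_null_set)
    with T(4) eE show False by simp
  qed
  have T_ne: "T \<noteq> {}" using Tpos by auto
  have T_comp: "compact T"
    using T(1) bounded_subset[OF bounded_closed_interval T_sub] by (simp add: compact_eq_bounded_closed)
  define K where "K = cis ` T"
  have K_cl: "closed K" unfolding K_def
    by (intro compact_imp_closed compact_continuous_image T_comp) (intro continuous_intros)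
  have K_ne: "K \<noteq> {}" unfolding K_def using T_ne by auto
  have I0: "0 \<le> integral\<^sup>L NN (\<lambda>p. h p * indicator K (cis p))" by (rule pos_closed[OF K_cl K_ne])
  have a1: "AE p in lborel. p \<noteq> -pi" "AE p in lborel. p \<noteq> pi" by (rule AE_lborel_singleton)+
  have "AE p in lborel. p \<in> {-pi..pi} \<longrightarrow> h p * indicator K (cis p) = h p * indicator T p"
    using a1
  proof eventually_elim
    case (elim p)
    show ?case
    proof
      assume p: "p \<in> {-pi..pi}"
      have "cis p \<in> K \<longleftrightarrow> p \<in> T"
      proof
        assume "cis p \<in> K"
        then obtain t where t: "t \<in> T" "cis p = cis t" unfolding K_def by auto
        have tt: "t \<in> {-pi..pi}" using t T_sub by auto
        have pl: "-pi \<le> p" "p \<le> pi" using p by auto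
        have pp: "-pi < p" "p < pi"
          using le_neq_trans[OF pl(1) elim(1)[symmetric]] le_neq_trans[OF pl(2) elim(2)] by auto
        have tt2: "-pi \<le> t" "t \<le> pi" using tt by auto
        have dpt: "\<bar>p - t\<bar> < 2 * pi" unfolding abs_less_iff using pp tt2 by linarith
        have ex: "exp (\<i> * complex_of_real p) = exp (\<i> * complex_of_real t)"
          using t(2) unfolding cis_conv_exp .
        have "\<i> * complex_of_real p = \<i> * complex_of_real t"
        proof (rule exp_complex_eqI)
          show "\<bar>Im (\<i> * complex_of_real p) - Im (\<i> * complex_of_real t)\<bar> < 2 * pi" using dpt by simp
          show "exp (\<i> * complex_of_real p) = exp (\<i> * complex_of_real t)" by (rule ex)
        qed
        then have "p = t" by (metis complex_i_not_zero mult_cancel_left of_real_eq_iff)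
        with t show "p \<in> T" by simp
      next
        assume "p \<in> T" then show "cis p \<in> K" unfolding K_def by auto
      qed
      then show "h p * indicator K (cis p) = h p * indicator T p" by (simp add: indicator_def)
    qed
  qed
  then have ae: "AE p in NN. h p * indicator K (cis p) = h p * indicator T p" unfolding AE_NN .
  have cism: "cis \<in> borel_measurable (borel :: real measure)"
    by (rule borel_measurable_continuous_onI) (intro continuous_intros)
  have indK: "(\<lambda>p. indicator K (cis p) :: real) \<in> borel_measurable NN"
    apply (rule measurable_restrict_space1)
    unfolding measurable_lborel2
    by (rule measurable_compose[OF cism borel_measurable_indicator]) (simp add: K_cl borel_closed)
  have indT: "(\<lambda>p. indicator T p :: real) \<in> borel_measurable NN"
    by (rule measurable_restrict_space1) (rule borel_measurable_indicator, use T(1) in \<open>simp add: borel_closed\<close>)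
  have "integral\<^sup>L NN (\<lambda>p. h p * indicator K (cis p)) = integral\<^sup>L NN (\<lambda>p. h p * indicator T p)"
    by (rule integral_cong_AE[OF borel_measurable_times[OF hm indK] borel_measurable_times[OF hm indT] ae])
  with I0 have IT: "0 \<le> integral\<^sup>L NN (\<lambda>p. h p * indicator T p)" by simp
  have LT: "Linf_on (\<lambda>p. indicator T p :: real)"
  proof -
    have "AE p in NN. norm (indicator T p :: real) \<le> 1" by (intro AE_I2) (simp add: indicator_def)
    then show ?thesis unfolding Linf_iff using indT by blast
  qed
  have intT: "integrable NN (\<lambda>p. - (h p * indicator T p))"
    using Linf_integrable[OF Linf_mult[OF hL LT]] by simp
  have nn: "AE p in NN. 0 \<le> - (h p * indicator T p)"
  proof (intro AE_I2)
    fix p show "0 \<le> - (h p * indicator T p)"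
      using T(2) unfolding E_def by (auto simp: indicator_def)
  qed
  have "integral\<^sup>L NN (\<lambda>p. - (h p * indicator T p)) = 0"
  proof -
    have "0 \<le> integral\<^sup>L NN (\<lambda>p. - (h p * indicator T p))" by (rule integral_nonneg_AE[OF nn])
    moreover have "integral\<^sup>L NN (\<lambda>p. - (h p * indicator T p)) \<le> 0" using IT by simp
    ultimately show ?thesis by linarith
  qed
  then have "AE p in NN. - (h p * indicator T p) = 0" using integral_nonneg_eq_0_iff_AE[OF intT nn] by simp
  then have "AE p in NN. p \<notin> T"
  proof eventually_elim
    case (elim p)
    show ?case
    proof
      assume "p \<in> T"
      then have "h p < 0" using T(2) unfolding E_def by auto
      with elim \<open>p \<in> T\<close> show False by simp
    qed
  qed
  moreover have Ts: "T \<in> sets NN" unfolding sets_restrict_space_iff[OF sets_NN_ok] using T_sub T_bor by blast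
  moreover have Teq: "{x \<in> space NN. \<not> x \<notin> T} = T" using T_sub by auto
  ultimately have "emeasure NN T = 0" using AE_iff_measurable[OF Ts Teq] by simp
  with eNT Tpos show False by simp
qed

end


section \<open>Fourier coefficient lemmas\<close>

lemma orth:
  "integral\<^sup>L NN (\<lambda>p. exp (- \<i> * complex_of_real p * of_int m)) = (if m = 0 then complex_of_real (2*pi) else 0)"
proof (cases "m = 0")
  case True
  have "measure NN {-pi..pi} = measure lborel {-pi..pi::real}"
    by (rule measure_restrict_space[OF sets_NN_ok]) simp
  then have "measure NN (space NN) = 2*pi" by simp
  then show ?thesis using True by (simp add: scaleR_conv_of_real)
next
  case False
  define c where "c = - \<i> * of_int m"
  have c0: "c \<noteq> 0" unfolding c_def using False by simp
  have feq: "(\<lambda>p. exp (- \<i> * complex_of_real p * of_int m)) = (\<lambda>p. exp (c * complex_of_real p))"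
    unfolding c_def by (simp add: mult_ac)
  have "integral\<^sup>L NN (\<lambda>p. exp (c * complex_of_real p)) = (LINT p:{-pi..pi}|lborel. exp (c * complex_of_real p))"
    by (rule set_int_NN[symmetric])
  also have "\<dots> = (LBINT p=-pi..pi. exp (c * complex_of_real p))"
    by (rule interval_integral_Icc[symmetric]) simp
  also have "\<dots> = exp (c * complex_of_real pi) / c - exp (c * complex_of_real (-pi)) / c"
  proof (rule interval_integral_FTC_finite)
    show "continuous_on {min (-pi) pi..max (-pi) pi} (\<lambda>p. exp (c * complex_of_real p))"
      by (intro continuous_intros)
    fix x
    have "((\<lambda>z. exp (c * z)) has_field_derivative exp (c * complex_of_real x) * (c * 1)) (at (complex_of_real x))"
      by (rule DERIV_chain2[OF DERIV_exp DERIV_cmult[OF DERIV_ident]])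
    then have "((\<lambda>z. exp (c * z) / c) has_field_derivative exp (c * complex_of_real x) * (c * 1) / c) (at (complex_of_real x))"
      by (rule DERIV_cdivide)
    moreover have "exp (c * complex_of_real x) * (c * 1) / c = exp (c * complex_of_real x)" using c0 by simp
    ultimately have "((\<lambda>z. exp (c * z) / c) has_field_derivative exp (c * complex_of_real x)) (at (complex_of_real x))"
      by simp
    then have "((\<lambda>p. exp (c * complex_of_real p) / c) has_vector_derivative exp (c * complex_of_real x)) (at x)"
      by (rule has_vector_derivative_real_field)
    then show "((\<lambda>p. exp (c * complex_of_real p) / c) has_vector_derivative exp (c * complex_of_real x))
        (at x within {min (-pi) pi..max (-pi) pi})"
      by (rule has_vector_derivative_at_within)
  qed
  also have "\<dots> = 0"
  proof -
    have e1: "exp (c * complex_of_real (2*pi)) = 1"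
      unfolding exp_eq_1 c_def by (intro conjI exI[of _ "-m"]) simp_all
    have "c * complex_of_real pi = c * complex_of_real (-pi) + c * complex_of_real (2*pi)"
      by (simp add: algebra_simps)
    then have "exp (c * complex_of_real pi) = exp (c * complex_of_real (-pi)) * exp (c * complex_of_real (2*pi))"
      by (simp only: exp_add)
    then show ?thesis using e1 by simp
  qed
  finally show ?thesis using False feq by simp
qed

lemma Linf_exp: "Linf_on (\<lambda>p. exp (- \<i> * complex_of_real p * of_int m))"
  by (rule Linf_cont) (intro continuous_intros)

lemma X:
  fixes f :: "real \<Rightarrow> complex" and c :: "nat \<Rightarrow> complex" and k :: "nat \<Rightarrow> int"
  assumes fL: "Linf_on f"
  shows "integral\<^sup>L NN (\<lambda>p. f p * complex_of_real ((cmod (\<Sum>j<n. c j * exp (\<i> * of_int (k j) * of_real p)))\<^sup>2))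
       = (\<Sum>i<n. \<Sum>j<n. cnj (c i) * c j * integral\<^sup>L NN (\<lambda>p. f p * exp (- \<i> * complex_of_real p * of_int (k i - k j))))"
proof -
  have pw: "complex_of_real ((cmod (\<Sum>j<n. c j * exp (\<i> * of_int (k j) * of_real p)))\<^sup>2)
      = (\<Sum>i<n. \<Sum>j<n. cnj (c i) * c j * exp (- \<i> * complex_of_real p * of_int (k i - k j)))" for p
  proof -
    let ?T = "\<Sum>j<n. c j * exp (\<i> * of_int (k j) * of_real p)"
    have "complex_of_real ((cmod ?T)\<^sup>2) = ?T * cnj ?T" by (rule complex_norm_square)
    also have "\<dots> = cnj ?T * ?T" by (rule mult.commute)
    also have "cnj ?T = (\<Sum>i<n. cnj (c i) * exp (- \<i> * of_int (k i) * of_real p))"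
      by (simp add: exp_cnj)
    also have "(\<Sum>i<n. cnj (c i) * exp (- \<i> * of_int (k i) * of_real p)) * ?T
       = (\<Sum>i<n. \<Sum>j<n. (cnj (c i) * exp (- \<i> * of_int (k i) * of_real p)) * (c j * exp (\<i> * of_int (k j) * of_real p)))"
      by (rule sum_product)
    also have "\<dots> = (\<Sum>i<n. \<Sum>j<n. cnj (c i) * c j * exp (- \<i> * complex_of_real p * of_int (k i - k j)))"
    proof (intro sum.cong refl)
      fix i j
      have "exp (- \<i> * of_int (k i) * of_real p) * exp (\<i> * of_int (k j) * of_real p)
          = exp (- \<i> * complex_of_real p * of_int (k i - k j))"
        unfolding mult_exp_exp by (simp add: algebra_simps)
      then show "(cnj (c i) * exp (- \<i> * of_int (k i) * of_real p)) * (c j * exp (\<i> * of_int (k j) * of_real p))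
          = cnj (c i) * c j * exp (- \<i> * complex_of_real p * of_int (k i - k j))"
        by (metis (no_types, lifting) mult.assoc mult.left_commute)
    qed
    finally show ?thesis .
  qed
  have int: "integrable NN (\<lambda>p. f p * exp (- \<i> * complex_of_real p * of_int m))" for m
    by (rule Linf_integrable, rule Linf_mult[OF fL Linf_exp])
  have "integral\<^sup>L NN (\<lambda>p. f p * complex_of_real ((cmod (\<Sum>j<n. c j * exp (\<i> * of_int (k j) * of_real p)))\<^sup>2))
      = integral\<^sup>L NN (\<lambda>p. \<Sum>i<n. \<Sum>j<n. cnj (c i) * c j * (f p * exp (- \<i> * complex_of_real p * of_int (k i - k j))))"
    unfolding pw by (simp add: sum_distrib_left mult_ac)
  also have "\<dots> = (\<Sum>i<n. integral\<^sup>L NN (\<lambda>p. \<Sum>j<n. cnj (c i) * c j * (f p * exp (- \<i> * complex_of_real p * of_int (k i - k j)))))"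
    by (rule Bochner_Integration.integral_sum)
       (intro Bochner_Integration.integrable_sum integrable_mult_right int)
  also have "\<dots> = (\<Sum>i<n. \<Sum>j<n. cnj (c i) * c j * integral\<^sup>L NN (\<lambda>p. f p * exp (- \<i> * complex_of_real p * of_int (k i - k j))))"
  proof (intro sum.cong refl)
    fix i :: nat
    show "integral\<^sup>L NN (\<lambda>p. \<Sum>j<n. cnj (c i) * c j * (f p * exp (- \<i> * complex_of_real p * of_int (k i - k j))))
      = (\<Sum>j<n. cnj (c i) * c j * integral\<^sup>L NN (\<lambda>p. f p * exp (- \<i> * complex_of_real p * of_int (k i - k j))))"
    proof -
      have "integral\<^sup>L NN (\<lambda>p. \<Sum>j<(n::nat). cnj (c i) * c j * (f p * exp (- \<i> * complex_of_real p * of_int (k i - k j))))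
        = (\<Sum>j<n. integral\<^sup>L NN (\<lambda>p. cnj (c i) * c j * (f p * exp (- \<i> * complex_of_real p * of_int (k i - k j)))))"
        by (rule Bochner_Integration.integral_sum) (intro integrable_mult_right int)
      then show ?thesis by (simp only: integral_mult_right_zero)
    qed
  qed
  finally show ?thesis .
qed

lemma G:
  fixes f :: "real \<Rightarrow> complex" and w :: "int \<Rightarrow> int \<Rightarrow> complex"
  assumes fL: "Linf_on f"
    and wf: "\<And>x y. w x y = complex_of_real (1/(2*pi)) *
               integral\<^sup>L NN (\<lambda>p. f p * exp (- \<i> * complex_of_real p * of_int (x - y)))"
    and wpos: "\<And>(n::nat) c k. Im (\<Sum>i<n. \<Sum>j<n. cnj (c i) * c j * w (k i) (k j)) = 0 \<and>
                  0 \<le> Re (\<Sum>i<n. \<Sum>j<n. cnj (c i) * c j * w (k i) (k j))"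
  shows "AE p in NN. Im (f p) = 0 \<and> 0 \<le> Re (f p)"
proof -
  define T where "T n c k p = (cmod (\<Sum>j<n. c j * exp (\<i> * of_int (k j) * of_real p)))\<^sup>2"
    for n :: nat and c :: "nat \<Rightarrow> complex" and k :: "nat \<Rightarrow> int" and p :: real
  have key: "integral\<^sup>L NN (\<lambda>p. f p * complex_of_real (T n c k p))
      = complex_of_real (2*pi) * (\<Sum>i<n. \<Sum>j<n. cnj (c i) * c j * w (k i) (k j))" for n c k
  proof -
    have "(\<Sum>i<n. \<Sum>j<n. cnj (c i) * c j * w (k i) (k j))
       = complex_of_real (1/(2*pi)) * (\<Sum>i<n. \<Sum>j<n. cnj (c i) * c j *
            integral\<^sup>L NN (\<lambda>p. f p * exp (- \<i> * complex_of_real p * of_int (k i - k j))))"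
      by (simp add: wf sum_distrib_left mult_ac)
    then show ?thesis unfolding T_def X[OF fL] by simp
  qed
  have Tc: "Linf_on (\<lambda>p. complex_of_real (T n c k p))" for n c k
    unfolding T_def by (rule Linf_cont) (intro continuous_intros)
  have intf: "integrable NN (\<lambda>p. f p * complex_of_real (T n c k p))" for n c k
    by (rule Linf_integrable, rule Linf_mult[OF fL Tc])
  have iRe: "integral\<^sup>L NN (\<lambda>p. Re (f p) * T n c k p) = 2*pi * Re (\<Sum>i<n. \<Sum>j<n. cnj (c i) * c j * w (k i) (k j))" for n c k
  proof -
    have e1: "(\<lambda>p. Re (f p) * T n c k p) = (\<lambda>p. Re (f p * complex_of_real (T n c k p)))"
      by simp
    have "integral\<^sup>L NN (\<lambda>p. Re (f p) * T n c k p) = Re (integral\<^sup>L NN (\<lambda>p. f p * complex_of_real (T n c k p)))"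
      unfolding e1 by (rule integral_Re[OF intf])
    also have "\<dots> = Re (complex_of_real (2*pi) * (\<Sum>i<n. \<Sum>j<n. cnj (c i) * c j * w (k i) (k j)))"
      by (simp only: key)
    also have "\<dots> = 2*pi * Re (\<Sum>i<n. \<Sum>j<n. cnj (c i) * c j * w (k i) (k j))"
      by simp
    finally show ?thesis .
  qed
  have iIm: "integral\<^sup>L NN (\<lambda>p. Im (f p) * T n c k p) = 2*pi * Im (\<Sum>i<n. \<Sum>j<n. cnj (c i) * c j * w (k i) (k j))" for n c k
  proof -
    have e1: "(\<lambda>p. Im (f p) * T n c k p) = (\<lambda>p. Im (f p * complex_of_real (T n c k p)))"
      by simp
    have "integral\<^sup>L NN (\<lambda>p. Im (f p) * T n c k p) = Im (integral\<^sup>L NN (\<lambda>p. f p * complex_of_real (T n c k p)))"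
      unfolding e1 by (rule integral_Im[OF intf])
    also have "\<dots> = Im (complex_of_real (2*pi) * (\<Sum>i<n. \<Sum>j<n. cnj (c i) * c j * w (k i) (k j)))"
      by (simp only: key)
    also have "\<dots> = 2*pi * Im (\<Sum>i<n. \<Sum>j<n. cnj (c i) * c j * w (k i) (k j))"
      by simp
    finally show ?thesis .
  qed
  have A1: "AE p in NN. 0 \<le> Re (f p)"
  proof (rule posP)
    show "Linf_on (\<lambda>p. Re (f p))" by (rule Linf_comp[OF fL bounded_linear_Re])
    show "0 \<le> integral\<^sup>L NN (\<lambda>p. Re (f p) * (cmod (\<Sum>j<n. c j * exp (\<i> * of_int (k j) * of_real p)))\<^sup>2)" for n :: nat and c k
      using iRe[where n=n and c=c and k=k] wpos[where n=n and c=c and k=k] unfolding T_def by simp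
  qed
  have A2: "AE p in NN. 0 \<le> Im (f p)"
  proof (rule posP)
    show "Linf_on (\<lambda>p. Im (f p))" by (rule Linf_comp[OF fL bounded_linear_Im])
    show "0 \<le> integral\<^sup>L NN (\<lambda>p. Im (f p) * (cmod (\<Sum>j<n. c j * exp (\<i> * of_int (k j) * of_real p)))\<^sup>2)" for n :: nat and c k
      using iIm[where n=n and c=c and k=k] wpos[where n=n and c=c and k=k] unfolding T_def by simp
  qed
  have A3: "AE p in NN. 0 \<le> - Im (f p)"
  proof (rule posP)
    show "Linf_on (\<lambda>p. - Im (f p))"
      using Linf_comp[OF fL bounded_linear_minus[OF bounded_linear_Im]] by simp
    show "0 \<le> integral\<^sup>L NN (\<lambda>p. - Im (f p) * (cmod (\<Sum>j<n. c j * exp (\<i> * of_int (k j) * of_real p)))\<^sup>2)" for n :: nat and c k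
      using iIm[where n=n and c=c and k=k] wpos[where n=n and c=c and k=k] unfolding T_def by simp
  qed
  show ?thesis using A1 A2 A3 by eventually_elim auto
qed

lemma U:
  fixes g :: "real \<Rightarrow> complex"
  assumes gL: "Linf_on g"
    and z: "\<And>m::int. integral\<^sup>L NN (\<lambda>p. g p * exp (- \<i> * complex_of_real p * of_int m)) = 0"
  shows "AE p in NN. g p = 0"
proof -
  have w1: "(0::complex) = complex_of_real (1/(2*pi)) *
      integral\<^sup>L NN (\<lambda>p. g p * exp (- \<i> * complex_of_real p * of_int (x - y)))" for x y
    using z[of "x - y"] by simp
  have 1: "AE p in NN. Im (g p) = 0 \<and> 0 \<le> Re (g p)"
    by (rule G[OF gL, where w="\<lambda>x y. 0", OF w1]) simp
  have mL: "Linf_on (\<lambda>p. - g p)"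
    using Linf_comp[OF gL bounded_linear_minus[OF bounded_linear_ident]] by simp
  have w2: "(0::complex) = complex_of_real (1/(2*pi)) *
      integral\<^sup>L NN (\<lambda>p. - g p * exp (- \<i> * complex_of_real p * of_int (x - y)))" for x y
    using z[of "x - y"] by simp
  have 2: "AE p in NN. Im (- g p) = 0 \<and> 0 \<le> Re (- g p)"
    by (rule G[OF mL, where w="\<lambda>x y. 0", OF w2]) simp
  show ?thesis using 1 2 by eventually_elim (auto simp: complex_eq_iff)
qed

lemma Z:
  fixes f :: "real \<Rightarrow> complex"
  assumes fL: "Linf_on f"
    and per: "\<And>m::int. integral\<^sup>L NN (\<lambda>p. f p * exp (- \<i> * complex_of_real p * of_int (m + 2)))
                     = integral\<^sup>L NN (\<lambda>p. f p * exp (- \<i> * complex_of_real p * of_int m))"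
  shows "AE p in NN. f p = 0"
proof -
  define g where "g p = f p * (1 - exp (2 * \<i> * complex_of_real p))" for p
  have eL: "Linf_on (\<lambda>p. 1 - exp (2 * \<i> * complex_of_real p))" by (rule Linf_cont) (intro continuous_intros)
  have gL: "Linf_on g" unfolding g_def by (rule Linf_mult[OF fL eL])
  have int: "integrable NN (\<lambda>p. f p * exp (- \<i> * complex_of_real p * of_int m))" for m
    by (rule Linf_integrable, rule Linf_mult[OF fL Linf_exp])
  have "AE p in NN. g p = 0"
  proof (rule U[OF gL])
    fix m :: int
    have pw: "g p * exp (- \<i> * complex_of_real p * of_int m)
        = f p * exp (- \<i> * complex_of_real p * of_int m) - f p * exp (- \<i> * complex_of_real p * of_int (m - 2))" for p
    proof -
      have "exp (2 * \<i> * complex_of_real p) * exp (- \<i> * complex_of_real p * of_int m)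
          = exp (- \<i> * complex_of_real p * of_int (m - 2))"
        unfolding mult_exp_exp by (simp add: algebra_simps)
      then show ?thesis unfolding g_def by (simp add: algebra_simps)
    qed
    have "integral\<^sup>L NN (\<lambda>p. g p * exp (- \<i> * complex_of_real p * of_int m))
        = integral\<^sup>L NN (\<lambda>p. f p * exp (- \<i> * complex_of_real p * of_int m))
          - integral\<^sup>L NN (\<lambda>p. f p * exp (- \<i> * complex_of_real p * of_int (m - 2)))"
      unfolding pw by (rule Bochner_Integration.integral_diff[OF int int])
    also have "\<dots> = 0" using per[of "m - 2"] by simp
    finally show "integral\<^sup>L NN (\<lambda>p. g p * exp (- \<i> * complex_of_real p * of_int m)) = 0" .
  qed
  moreover have "AE p in NN. p \<in> {-pi..pi} \<and> p \<noteq> -pi \<and> p \<noteq> 0 \<and> p \<noteq> pi"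
    unfolding AE_NN using AE_lborel_singleton[of "-pi"] AE_lborel_singleton[of 0] AE_lborel_singleton[of pi]
    by eventually_elim auto
  ultimately show ?thesis
  proof eventually_elim
    case (elim p)
    have pl: "-pi \<le> p" "p \<le> pi" using elim(2) by auto
    have p: "-pi < p" "p < pi" "p \<noteq> 0"
      using le_neq_trans[OF pl(1)] le_neq_trans[OF pl(2)] elim(2) by auto
    have ne: "exp (2 * \<i> * complex_of_real p) \<noteq> 1"
    proof
      assume e: "exp (2 * \<i> * complex_of_real p) = 1"
      have "2 * \<i> * complex_of_real p = 0"
      proof (rule exp_complex_eqI)
        have "\<bar>2 * p\<bar> < 2 * pi" unfolding abs_less_iff using p by linarith
        then show "\<bar>Im (2 * \<i> * complex_of_real p) - Im 0\<bar> < 2 * pi" by simp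
        show "exp (2 * \<i> * complex_of_real p) = exp 0" using e by simp
      qed
      with p(3) show False by simp
    qed
    from elim(1) have "f p * (1 - exp (2 * \<i> * complex_of_real p)) = 0" unfolding g_def .
    with ne show "f p = 0" by simp
  qed
qed

lemma Linf_diff:
  fixes f g :: "real \<Rightarrow> 'a::{second_countable_topology, real_normed_vector}"
  assumes "Linf_on f" "Linf_on g" shows "Linf_on (\<lambda>p. f p - g p)"
proof -
  from assms obtain C D where C: "AE p in NN. norm (f p) \<le> C" and D: "AE p in NN. norm (g p) \<le> D"
    and m: "f \<in> borel_measurable NN" "g \<in> borel_measurable NN" unfolding Linf_iff by blast
  have "AE p in NN. norm (f p - g p) \<le> C + D"
    using C D
  proof eventually_elim
    case (elim p)
    have "norm (f p - g p) \<le> norm (f p) + norm (g p)" by (rule norm_triangle_ineq4)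
    also have "\<dots> \<le> C + D" using elim by simp
    finally show ?case .
  qed
  then show ?thesis unfolding Linf_iff using m by auto
qed


lemma mj1: "mj x 1 = 2 * x" by (simp add: mj_def)
lemma mj2: "mj x 2 = 2 * x + 1" by (simp add: mj_def)

lemma sym_L: "is_symbol om Q \<Longrightarrow> Linf_on (\<lambda>p. Q p $ a $ b)"
  unfolding is_symbol_def by blast

lemma sym_f: "is_symbol om Q \<Longrightarrow> om [mj x a, mj y b] = complex_of_real (1 / (2 * pi)) *
    integral\<^sup>L NN (\<lambda>p. Q p $ a $ b * exp (- \<i> * complex_of_real p * of_int (x - y)))"
  unfolding is_symbol_def set_int_NN by blast

lemma st_empty: "is_state om \<Longrightarrow> om [] = 1"
  unfolding is_state_def by blast

lemma st_cliff: assumes "is_state om" shows "om [x, y] + om [y, x] = (if x = y then 2 else 0)"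
proof -
  have A: "\<forall>u v x y. om (u @ [x, y] @ v) + om (u @ [y, x] @ v) = (if x = y then 2 else 0) * om (u @ v)"
    using assms unfolding is_state_def by (elim conjE)
  have "om ([] @ [x, y] @ []) + om ([] @ [y, x] @ []) = (if x = y then 2 else 0) * om ([] @ [])"
    using spec[OF spec[OF spec[OF spec[OF A, of "[]"], of "[]"], of x], of y] .
  then show ?thesis using st_empty[OF assms] by simp
qed

lemma st_pos:
  fixes n :: nat and cs :: "nat \<Rightarrow> complex" and ws :: "nat \<Rightarrow> int list"
  assumes "is_state om"
  shows "Im (\<Sum>i<n. \<Sum>j<n. cnj (cs i) * cs j * om (rev (ws i) @ ws j)) = 0 \<and>
         0 \<le> Re (\<Sum>i<n. \<Sum>j<n. cnj (cs i) * cs j * om (rev (ws i) @ ws j))"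
  using assms unfolding is_state_def Let_def by blast

lemma diag:
  assumes st: "is_state om" and sy: "is_symbol om Q"
  shows "AE p in NN. Im (Q p $ a $ a) = 0 \<and> 0 \<le> Re (Q p $ a $ a) \<and> Re (Q p $ a $ a) \<le> 2"
proof -
  have QL: "Linf_on (\<lambda>p. Q p $ a $ a)" by (rule sym_L[OF sy])
  have 1: "AE p in NN. Im (Q p $ a $ a) = 0 \<and> 0 \<le> Re (Q p $ a $ a)"
  proof (rule G[OF QL, where w="\<lambda>x y. om [mj x a, mj y a]"])
    show "om [mj x a, mj y a] = complex_of_real (1 / (2 * pi)) *
      integral\<^sup>L NN (\<lambda>p. Q p $ a $ a * exp (- \<i> * complex_of_real p * of_int (x - y)))" for x y
      by (rule sym_f[OF sy])
    show "Im (\<Sum>i<n. \<Sum>j<n. cnj (c i) * c j * om [mj (k i) a, mj (k j) a]) = 0 \<and>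
          0 \<le> Re (\<Sum>i<n. \<Sum>j<n. cnj (c i) * c j * om [mj (k i) a, mj (k j) a])" for n :: nat and c k
      using st_pos[OF st, where n=n and ws="\<lambda>i. [mj (k i) a]" and cs=c] by simp
  qed
  have 2: "AE p in NN. Im (2 - Q p $ a $ a) = 0 \<and> 0 \<le> Re (2 - Q p $ a $ a)"
  proof (rule G[where w="\<lambda>x y. om [mj y a, mj x a]"])
    show "Linf_on (\<lambda>p. 2 - Q p $ a $ a)"
      by (rule Linf_diff[OF Linf_cont[OF continuous_on_const] QL])
    show "om [mj y a, mj x a] = complex_of_real (1 / (2 * pi)) *
      integral\<^sup>L NN (\<lambda>p. (2 - Q p $ a $ a) * exp (- \<i> * complex_of_real p * of_int (x - y)))" for x y
    proof -
      let ?E = "\<lambda>p. exp (- \<i> * complex_of_real p * of_int (x - y))"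
      have int1: "integrable NN ?E" by (rule Linf_integrable[OF Linf_exp])
      have int2: "integrable NN (\<lambda>p. Q p $ a $ a * ?E p)"
        by (rule Linf_integrable[OF Linf_mult[OF QL Linf_exp]])
      have feq: "(\<lambda>p. (2 - Q p $ a $ a) * ?E p) = (\<lambda>p. 2 * ?E p - Q p $ a $ a * ?E p)"
        by (simp add: algebra_simps)
      have "integral\<^sup>L NN (\<lambda>p. (2 - Q p $ a $ a) * ?E p)
          = integral\<^sup>L NN (\<lambda>p. 2 * ?E p) - integral\<^sup>L NN (\<lambda>p. Q p $ a $ a * ?E p)"
        unfolding feq by (rule Bochner_Integration.integral_diff[OF integrable_mult_right[OF int1] int2])
      also have "integral\<^sup>L NN (\<lambda>p. 2 * ?E p) = 2 * integral\<^sup>L NN ?E" by (rule integral_mult_right_zero)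
      also have "integral\<^sup>L NN ?E = (if x - y = 0 then complex_of_real (2*pi) else 0)" by (rule orth)
      finally have I: "integral\<^sup>L NN (\<lambda>p. (2 - Q p $ a $ a) * ?E p)
          = 2 * (if x = y then complex_of_real (2*pi) else 0) - integral\<^sup>L NN (\<lambda>p. Q p $ a $ a * ?E p)"
        by simp
      have mjeq: "mj x a = mj y a \<longleftrightarrow> x = y" by (simp add: mj_def)
      have cl: "om [mj y a, mj x a] = (if x = y then 2 else 0) - om [mj x a, mj y a]"
        using st_cliff[OF st, of "mj x a" "mj y a"] mjeq by (simp add: algebra_simps split: if_splits)
      have pin: "complex_of_real (1 / (2 * pi)) * complex_of_real (2*pi) = 1"
        by (simp flip: of_real_mult)
      let ?c = "complex_of_real (1 / (2 * pi))"
      have "om [mj y a, mj x a] = (if x = y then 2 else 0) - ?c * integral\<^sup>L NN (\<lambda>p. Q p $ a $ a * ?E p)"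
        unfolding cl sym_f[OF sy, of x a y a] ..
      also have "\<dots> = ?c * integral\<^sup>L NN (\<lambda>p. (2 - Q p $ a $ a) * ?E p)"
      proof (cases "x = y")
        case True
        have "?c * (2 * complex_of_real (2*pi)) = 2" using pin by (metis mult.left_commute mult.right_neutral)
        then show ?thesis unfolding I using True by (simp add: right_diff_distrib)
      next
        case False
        then show ?thesis unfolding I by (simp add: right_diff_distrib)
      qed
      finally show ?thesis .
    qed
    show "Im (\<Sum>i<n. \<Sum>j<n. cnj (c i) * c j * om [mj (k j) a, mj (k i) a]) = 0 \<and>
          0 \<le> Re (\<Sum>i<n. \<Sum>j<n. cnj (c i) * c j * om [mj (k j) a, mj (k i) a])" for n :: nat and c k
    proof -
      have "(\<Sum>i<n. \<Sum>j<n. cnj (c i) * c j * om [mj (k j) a, mj (k i) a])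
          = (\<Sum>i<n. \<Sum>j<n. cnj (cnj (c i)) * cnj (c j) * om (rev [mj (k i) a] @ [mj (k j) a]))"
        by (subst sum.swap) (simp add: mult_ac)
      then show ?thesis
        using st_pos[OF st, where n=n and ws="\<lambda>i. [mj (k i) a]" and cs="\<lambda>i. cnj (c i)"] by simp
    qed
  qed
  show ?thesis using 1 2 by eventually_elim auto
qed

lemma off:
  assumes sy: "is_symbol om Q" and inv: "invariant_under GF_idx om"
  shows "(AE p in NN. Q p $ 1 $ 2 = 0) \<and> (AE p in NN. Q p $ 2 $ 1 = 0)"
proof -
  have inv2: "om [GF_idx u, GF_idx v] = om [u, v]" for u v
    using inv[unfolded invariant_under_def, rule_format, of "[u, v]"] by simp
  define cf where "cf a b m = integral\<^sup>L NN (\<lambda>p. Q p $ a $ b * exp (- \<i> * complex_of_real p * of_int m))"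
    for a b :: 2 and m :: int
  have Qf: "om [mj x a, mj y b] = complex_of_real (1 / (2 * pi)) * cf a b (x - y)" for x y a b
    unfolding cf_def by (rule sym_f[OF sy])
  have nz: "complex_of_real (1 / (2 * pi)) \<noteq> 0" by simp
  have g1: "GF_idx (mj x 1) = mj (x - 1) 1" for x by (simp add: GF_idx_def mj1 algebra_simps)
  have g2: "GF_idx (mj x 2) = mj (x + 1) 2" for x by (simp add: GF_idx_def mj2 algebra_simps)
  have p12: "cf 1 2 (m + 2) = cf 1 2 m" for m
  proof -
    have "om [mj (m + 2 - 1) 1, mj (0 + 1) 2] = om [mj (m + 2) 1, mj 0 2]"
      using inv2[of "mj (m + 2) 1" "mj 0 2"] unfolding g1 g2 .
    then have "complex_of_real (1 / (2 * pi)) * cf 1 2 m = complex_of_real (1 / (2 * pi)) * cf 1 2 (m + 2)"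
      unfolding Qf by simp
    then show ?thesis using nz by simp
  qed
  have p21: "cf 2 1 (m + 2) = cf 2 1 m" for m
  proof -
    have "om [mj (m + 1) 2, mj (0 - 1) 1] = om [mj m 2, mj 0 1]"
      using inv2[of "mj m 2" "mj 0 1"] unfolding g1 g2 .
    then have "complex_of_real (1 / (2 * pi)) * cf 2 1 (m + 2) = complex_of_real (1 / (2 * pi)) * cf 2 1 m"
      unfolding Qf by (simp add: algebra_simps)
    then show ?thesis using nz by simp
  qed
  have "AE p in NN. Q p $ 1 $ 2 = 0"
    by (rule Z[OF sym_L[OF sy]]) (use p12 in \<open>simp add: cf_def\<close>)
  moreover have "AE p in NN. Q p $ 2 $ 1 = 0"
    by (rule Z[OF sym_L[OF sy]]) (use p21 in \<open>simp add: cf_def\<close>)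
  ultimately show ?thesis by blast
qed

lemma back_inv:
  assumes sy: "is_symbol om Q" and tau: "invariant_under tauF_idx om"
    and z12: "AE p in NN. Q p $ 1 $ 2 = 0" and z21: "AE p in NN. Q p $ 2 $ 1 = 0"
  shows "om [GF_idx u, GF_idx v] = om [u, v]"
proof -
  have c0: "om [mj x a, mj y b] = 0" if z: "AE p in NN. Q p $ a $ b = 0" for x y a b
  proof -
    have "AE p in NN. Q p $ a $ b * exp (- \<i> * complex_of_real p * of_int (x - y)) = 0"
      using z by eventually_elim simp
    then have "integral\<^sup>L NN (\<lambda>p. Q p $ a $ b * exp (- \<i> * complex_of_real p * of_int (x - y))) = 0"
      by (rule integral_eq_zero_AE)
    then show ?thesis unfolding sym_f[OF sy] by simp
  qed
  have e12: "om [2 * x, 2 * y + 1] = 0" for x y using c0[OF z12, of x y] by (simp add: mj1 mj2)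
  have e21: "om [2 * x + 1, 2 * y] = 0" for x y using c0[OF z21, of x y] by (simp add: mj1 mj2)
  have t2: "om [a + 2, b + 2] = om [a, b]" for a b
    using tau[unfolded invariant_under_def, rule_format, of "[a, b]"] by (simp add: tauF_idx_def)
  show ?thesis
  proof (cases "even u")
    case True
    then obtain x where u: "u = 2 * x" by (auto elim: evenE)
    show ?thesis
    proof (cases "even v")
      case True
      then obtain y where v: "v = 2 * y" by (auto elim: evenE)
      have "om [GF_idx u, GF_idx v] = om [2 * x - 2, 2 * y - 2]" by (simp add: u v GF_idx_def)
      also have "\<dots> = om [(2 * x - 2) + 2, (2 * y - 2) + 2]" by (rule t2[symmetric])
      also have "\<dots> = om [u, v]" by (simp add: u v)
      finally show ?thesis .
    next
      case False
      then obtain y where v: "v = 2 * y + 1" by (auto elim: oddE)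
      have "om [GF_idx u, GF_idx v] = om [2 * (x - 1), 2 * (y + 1) + 1]"
        by (simp add: u v GF_idx_def algebra_simps)
      also have "\<dots> = 0" by (rule e12)
      also have "\<dots> = om [u, v]" unfolding u v by (rule e12[symmetric])
      finally show ?thesis .
    qed
  next
    case False
    then obtain x where u: "u = 2 * x + 1" by (auto elim: oddE)
    show ?thesis
    proof (cases "even v")
      case True
      then obtain y where v: "v = 2 * y" by (auto elim: evenE)
      have "om [GF_idx u, GF_idx v] = om [2 * (x + 1) + 1, 2 * (y - 1)]"
        by (simp add: u v GF_idx_def algebra_simps)
      also have "\<dots> = 0" by (rule e21)
      also have "\<dots> = om [u, v]" unfolding u v by (rule e21[symmetric])
      finally show ?thesis .
    next
      case False
      then obtain y where v: "v = 2 * y + 1" by (auto elim: oddE)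
      have "om [GF_idx u, GF_idx v] = om [u + 2, v + 2]" by (simp add: u v GF_idx_def)
      also have "\<dots> = om [u, v]" by (rule t2)
      finally show ?thesis .
    qed
  qed
qed

lemma qf_inv:
  assumes qf: "quasifree om" and two: "\<And>u v. om [g u, g v] = om [u, v]"
  shows "invariant_under g om"
  unfolding invariant_under_def
proof
  fix w :: "int list"
  have H: "om w = (\<Sum>\<sigma>\<in>pairings (length w div 2). of_int (sign \<sigma>) *
                  (\<Prod>l<length w div 2. om [w ! \<sigma> (2*l), w ! \<sigma> (2*l+1)]))" if "even (length w)" for w
    using qf that unfolding quasifree_def by blast
  have O: "om w = 0" if "odd (length w)" for w
    using qf that unfolding quasifree_def by blast
  show "om (map g w) = om w"
  proof (cases "odd (length w)")
    case True then show ?thesis using O[of w] O[of "map g w"] by simp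
  next
    case False
    let ?n = "length w div 2"
    have len: "2 * ?n = length w" using False by simp
    have "om (map g w) = (\<Sum>\<sigma>\<in>pairings ?n. of_int (sign \<sigma>) *
                  (\<Prod>l<?n. om [map g w ! \<sigma> (2*l), map g w ! \<sigma> (2*l+1)]))"
      using H[of "map g w"] False by simp
    also have "\<dots> = (\<Sum>\<sigma>\<in>pairings ?n. of_int (sign \<sigma>) *
                  (\<Prod>l<?n. om [w ! \<sigma> (2*l), w ! \<sigma> (2*l+1)]))"
    proof (rule sum.cong[OF refl])
      fix \<sigma> assume s: "\<sigma> \<in> pairings ?n"
      then have perm: "\<sigma> permutes {..<2 * ?n}" unfolding pairings_def by blast
      have "(\<Prod>l<?n. om [map g w ! \<sigma> (2*l), map g w ! \<sigma> (2*l+1)]) = (\<Prod>l<?n. om [w ! \<sigma> (2*l), w ! \<sigma> (2*l+1)])"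
      proof (rule prod.cong[OF refl])
        fix l assume l: "l \<in> {..<?n}"
        have a: "\<sigma> (2*l) < length w" using permutes_in_image[OF perm, of "2*l"] l len by auto
        have b: "\<sigma> (2*l+1) < length w" using permutes_in_image[OF perm, of "2*l+1"] l len by auto
        show "om [map g w ! \<sigma> (2*l), map g w ! \<sigma> (2*l+1)] = om [w ! \<sigma> (2*l), w ! \<sigma> (2*l+1)]"
          using a b two by simp
      qed
      then show "of_int (sign \<sigma>) * (\<Prod>l<?n. om [map g w ! \<sigma> (2*l), map g w ! \<sigma> (2*l+1)])
          = of_int (sign \<sigma>) * (\<Prod>l<?n. om [w ! \<sigma> (2*l), w ! \<sigma> (2*l+1)])" by simp
    qed
    also have "\<dots> = om w" using H[of w] False by simp
    finally show ?thesis .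
  qed
qed

theorem mainTheorem10:
  fixes om :: "int list \<Rightarrow> complex" and Q :: "real \<Rightarrow> complex^2^2"
  assumes "is_state om" and "quasifree om" and "invariant_under tauF_idx om"
    and "is_symbol om Q"
  shows "invariant_under GF_idx om \<longleftrightarrow>
    (\<exists>q11 q22 :: real \<Rightarrow> real. Linf_on q11 \<and> Linf_on q22 \<and>
       (AE p in lborel. p \<in> {-pi..pi} \<longrightarrow>
          Q p $ 1 $ 1 = complex_of_real (q11 p) \<and> Q p $ 1 $ 2 = 0 \<and>
          Q p $ 2 $ 1 = 0 \<and> Q p $ 2 $ 2 = complex_of_real (q22 p) \<and>
          0 \<le> q11 p \<and> q11 p \<le> 2 \<and> 0 \<le> q22 p \<and> q22 p \<le> 2))"
proof
  assume inv: "invariant_under GF_idx om"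
  have d1: "AE p in NN. Im (Q p $ 1 $ 1) = 0 \<and> 0 \<le> Re (Q p $ 1 $ 1) \<and> Re (Q p $ 1 $ 1) \<le> 2"
    by (rule diag[OF assms(1,4)])
  have d2: "AE p in NN. Im (Q p $ 2 $ 2) = 0 \<and> 0 \<le> Re (Q p $ 2 $ 2) \<and> Re (Q p $ 2 $ 2) \<le> 2"
    by (rule diag[OF assms(1,4)])
  have o12: "AE p in NN. Q p $ 1 $ 2 = 0" and o21: "AE p in NN. Q p $ 2 $ 1 = 0"
    using off[OF assms(4) inv] by blast+
  define q11 where "q11 p = Re (Q p $ 1 $ 1)" for p
  define q22 where "q22 p = Re (Q p $ 2 $ 2)" for p
  have L1: "Linf_on q11" unfolding q11_def by (rule Linf_comp[OF sym_L[OF assms(4)] bounded_linear_Re])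
  have L2: "Linf_on q22" unfolding q22_def by (rule Linf_comp[OF sym_L[OF assms(4)] bounded_linear_Re])
  have "AE p in NN. Q p $ 1 $ 1 = complex_of_real (q11 p) \<and> Q p $ 1 $ 2 = 0 \<and>
          Q p $ 2 $ 1 = 0 \<and> Q p $ 2 $ 2 = complex_of_real (q22 p) \<and>
          0 \<le> q11 p \<and> q11 p \<le> 2 \<and> 0 \<le> q22 p \<and> q22 p \<le> 2"
    using d1 d2 o12 o21 by eventually_elim (auto simp: q11_def q22_def complex_eq_iff)
  then have "AE p in lborel. p \<in> {-pi..pi} \<longrightarrow>
          Q p $ 1 $ 1 = complex_of_real (q11 p) \<and> Q p $ 1 $ 2 = 0 \<and>
          Q p $ 2 $ 1 = 0 \<and> Q p $ 2 $ 2 = complex_of_real (q22 p) \<and>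
          0 \<le> q11 p \<and> q11 p \<le> 2 \<and> 0 \<le> q22 p \<and> q22 p \<le> 2"
    unfolding AE_NN .
  with L1 L2 show "\<exists>q11 q22 :: real \<Rightarrow> real. Linf_on q11 \<and> Linf_on q22 \<and>
       (AE p in lborel. p \<in> {-pi..pi} \<longrightarrow>
          Q p $ 1 $ 1 = complex_of_real (q11 p) \<and> Q p $ 1 $ 2 = 0 \<and>
          Q p $ 2 $ 1 = 0 \<and> Q p $ 2 $ 2 = complex_of_real (q22 p) \<and>
          0 \<le> q11 p \<and> q11 p \<le> 2 \<and> 0 \<le> q22 p \<and> q22 p \<le> 2)" by blast
next
  assume "\<exists>q11 q22 :: real \<Rightarrow> real. Linf_on q11 \<and> Linf_on q22 \<and>
       (AE p in lborel. p \<in> {-pi..pi} \<longrightarrow>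
          Q p $ 1 $ 1 = complex_of_real (q11 p) \<and> Q p $ 1 $ 2 = 0 \<and>
          Q p $ 2 $ 1 = 0 \<and> Q p $ 2 $ 2 = complex_of_real (q22 p) \<and>
          0 \<le> q11 p \<and> q11 p \<le> 2 \<and> 0 \<le> q22 p \<and> q22 p \<le> 2)"
  then obtain q11 q22 :: "real \<Rightarrow> real" where H: "AE p in lborel. p \<in> {-pi..pi} \<longrightarrow>
          Q p $ 1 $ 1 = complex_of_real (q11 p) \<and> Q p $ 1 $ 2 = 0 \<and>
          Q p $ 2 $ 1 = 0 \<and> Q p $ 2 $ 2 = complex_of_real (q22 p) \<and>
          0 \<le> q11 p \<and> q11 p \<le> 2 \<and> 0 \<le> q22 p \<and> q22 p \<le> 2" by blast
  have z12: "AE p in NN. Q p $ 1 $ 2 = 0" unfolding AE_NN using H by eventually_elim auto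
  have z21: "AE p in NN. Q p $ 2 $ 1 = 0" unfolding AE_NN using H by eventually_elim auto
  show "invariant_under GF_idx om"
    by (rule qf_inv[OF assms(2)]) (rule back_inv[OF assms(4,3) z12 z21])
qed

end
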